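(* Let $\omega:[0,\infty)\to[0,\infty)$ be decreasing with $0<\int_0^\infty t^{\alpha-1}\omega(t)\,dt<\infty$ for all $\alpha>0$ and $0<\int_0^\infty t^{\alpha-1}(\omega(0)-\omega(t))\,dt<\infty$ for all $-1<\alpha<0$. Let $\varphi:[0,\infty)\to[0,\infty)$ be non-zero with $\varphi(0)=0$ such that $t\mapsto\varphi(t)$ and $t\mapsto\varphi(t)/t$ are increasing on $(0,\infty)$. Then \[\zeta(\alpha)=\begin{cases}\Big(\dfrac{\int_0^\infty t^{\alpha-1}\omega(\varphi(t))\,dt}{\int_0^\infty t^{\alpha-1}\omega(t)\,dt}\Big)^{1/\alpha}&\alpha>0,\\[2mm]\exp\Big(\displaystyle\int_0^\infty\frac{\omega(\varphi(t))-\omega(t)}{t\,\omega(0)}\,dt\Big)&\alpha=0,\\[2mm]\Big(\dfrac{\int_0^\infty t^{\alpha-1}(\omega(\varphi(t))-\omega(0))\,dt}{\int_0^\infty t^{\alpha-1}(\omega(t)-\omega(0))\,dt}\Big)^{1/\alpha}&-1<\alpha<0,\end{cases}\] is a continuous, decreasing function of $\alpha$ on $(-1,\infty)$. Moreover, $\zeta$ is constant on $(-1,\infty)$ if $\varphi(t)=\lambda t$ on $[0,\infty)$ for some $\lambda>0$. *)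

theory Defs
  imports "HOL-Analysis.Analysis"
begin

definition zeta :: "(real \<Rightarrow> real) \<Rightarrow> (real \<Rightarrow> real) \<Rightarrow> real \<Rightarrow> real" where
  "zeta \<omega> \<phi> \<alpha> =
    (if \<alpha> > 0 then
       ((LINT t:{0<..}|lborel. t powr (\<alpha> - 1) * \<omega> (\<phi> t)) /
        (LINT t:{0<..}|lborel. t powr (\<alpha> - 1) * \<omega> t)) powr (1 / \<alpha>)
     else if \<alpha> = 0 then
       exp (LINT t:{0<..}|lborel. (\<omega> (\<phi> t) - \<omega> t) / (t * \<omega> 0))
     else
       ((LINT t:{0<..}|lborel. t powr (\<alpha> - 1) * (\<omega> (\<phi> t) - \<omega> 0)) /
        (LINT t:{0<..}|lborel. t powr (\<alpha> - 1) * (\<omega> t - \<omega> 0))) powr (1 / \<alpha>))"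

end

theory Submission
  imports Defs
begin


lemma powr_bound:
  fixes t a b x :: real
  assumes "t > 0" "a \<le> x" "x \<le> b"
  shows "t powr (x - 1) \<le> t powr (a - 1) + t powr (b - 1)"
proof (cases "t \<le> 1")
  case True
  then have "t powr (x - 1) \<le> t powr (a - 1)" using assms by (intro powr_mono') auto
  then show ?thesis by (smt (verit) powr_ge_zero)
next
  case False
  then have "t powr (x - 1) \<le> t powr (b - 1)" using assms by (intro powr_mono) auto
  then show ?thesis by (smt (verit) powr_ge_zero)
qed

lemma int_interp:
  fixes h :: "real \<Rightarrow> real"
  assumes hm[measurable]: "h \<in> borel_measurable borel"
  and ia: "set_integrable lborel {0<..} (\<lambda>t. t powr (a - 1) * h t)"
  and ib: "set_integrable lborel {0<..} (\<lambda>t. t powr (b - 1) * h t)"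
  and "a \<le> x" "x \<le> b"
  shows "set_integrable lborel {0<..} (\<lambda>t. t powr (x - 1) * h t)"
proof -
  have w: "integrable lborel (\<lambda>t. indicator {0<..} t * (t powr (a - 1) * \<bar>h t\<bar>) + indicator {0<..} t * (t powr (b - 1) * \<bar>h t\<bar>))"
  proof (rule Bochner_Integration.integrable_add)
    show "integrable lborel (\<lambda>t. indicator {0<..} t * (t powr (a - 1) * \<bar>h t\<bar>))"
      using set_integrable_abs[OF ia] unfolding set_integrable_def
      by (simp add: abs_mult)
    show "integrable lborel (\<lambda>t. indicator {0<..} t * (t powr (b - 1) * \<bar>h t\<bar>))"
      using set_integrable_abs[OF ib] unfolding set_integrable_def
      by (simp add: abs_mult)
  qed
  show ?thesis unfolding set_integrable_def
  proof (rule Bochner_Integration.integrable_bound[OF w])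
    show "(\<lambda>t. indicator {0<..} t *\<^sub>R (t powr (x - 1) * h t)) \<in> borel_measurable lborel"
      by measurable
    show "AE t in lborel. norm (indicator {0<..} t *\<^sub>R (t powr (x - 1) * h t)) \<le>
       norm (indicator {0<..} t * (t powr (a - 1) * \<bar>h t\<bar>) + indicator {0<..} t * (t powr (b - 1) * \<bar>h t\<bar>))"
    proof (rule AE_I2)
      fix t :: real
      show "norm (indicator {0<..} t *\<^sub>R (t powr (x - 1) * h t)) \<le>
       norm (indicator {0<..} t * (t powr (a - 1) * \<bar>h t\<bar>) + indicator {0<..} t * (t powr (b - 1) * \<bar>h t\<bar>))"
      proof (cases "t > 0")
        case True
        have "t powr (x - 1) * \<bar>h t\<bar> \<le> (t powr (a - 1) + t powr (b - 1)) * \<bar>h t\<bar>"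
          using powr_bound[OF True assms(4,5)] by (intro mult_right_mono) auto
        then show ?thesis using True by (simp add: abs_mult algebra_simps)
      qed simp
    qed
  qed
qed

lemma cont_param:
  fixes h :: "real \<Rightarrow> real"
  assumes hm[measurable]: "h \<in> borel_measurable borel"
  and ia: "set_integrable lborel {0<..} (\<lambda>t. t powr (a - 1) * h t)"
  and ib: "set_integrable lborel {0<..} (\<lambda>t. t powr (b - 1) * h t)"
  and ax: "a < x" and xb: "x < b"
  shows "isCont (\<lambda>y. LINT t:{0<..}|lborel. t powr (y - 1) * h t) x"
proof -
  let ?F = "\<lambda>y. LINT t:{0<..}|lborel. t powr (y - 1) * h t"
  let ?w = "\<lambda>t. indicator {0<..} t * (t powr (a - 1) * \<bar>h t\<bar>) + indicator {0<..} t * (t powr (b - 1) * \<bar>h t\<bar>)"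
  have w: "integrable lborel ?w"
  proof (rule Bochner_Integration.integrable_add)
    show "integrable lborel (\<lambda>t. indicator {0<..} t * (t powr (a - 1) * \<bar>h t\<bar>))"
      using set_integrable_abs[OF ia] unfolding set_integrable_def
      by (simp add: abs_mult)
    show "integrable lborel (\<lambda>t. indicator {0<..} t * (t powr (b - 1) * \<bar>h t\<bar>))"
      using set_integrable_abs[OF ib] unfolding set_integrable_def
      by (simp add: abs_mult)
  qed
  have "(?F \<circ> X) \<longlonglongrightarrow> ?F x" if X: "X \<longlonglongrightarrow> x" for X
  proof -
    define Y where "Y i = max a (min b (X i))" for i
    have "(\<lambda>i. max a (min b (X i))) \<longlonglongrightarrow> max a (min b x)"
      by (intro tendsto_max tendsto_min tendsto_const X)
    then have Y: "Y \<longlonglongrightarrow> x" using ax xb unfolding Y_def[abs_def] by simp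
    have Yab: "a \<le> Y i" "Y i \<le> b" for i using ax xb by (auto simp: Y_def)
    have limY: "(\<lambda>i. ?F (Y i)) \<longlonglongrightarrow> ?F x" unfolding set_lebesgue_integral_def
    proof (rule integral_dominated_convergence[OF _ _ w])
      show "(\<lambda>t. indicator {0<..} t *\<^sub>R (t powr (x - 1) * h t)) \<in> borel_measurable lborel"
        by measurable
      show "(\<lambda>t. indicator {0<..} t *\<^sub>R (t powr (Y i - 1) * h t)) \<in> borel_measurable lborel" for i
        by measurable
      show "AE t in lborel. (\<lambda>i. indicator {0<..} t *\<^sub>R (t powr (Y i - 1) * h t)) \<longlonglongrightarrow>
             indicator {0<..} t *\<^sub>R (t powr (x - 1) * h t)"
      proof (rule AE_I2)
        fix t :: real
        show "(\<lambda>i. indicator {0<..} t *\<^sub>R (t powr (Y i - 1) * h t)) \<longlonglongrightarrow>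
             indicator {0<..} t *\<^sub>R (t powr (x - 1) * h t)"
        proof (cases "t > 0")
          case True
          have "(\<lambda>i. t powr (Y i - 1)) \<longlonglongrightarrow> t powr (x - 1)"
            using True by (intro tendsto_powr tendsto_diff Y tendsto_const) auto
          then show ?thesis using True by (auto intro!: tendsto_mult tendsto_const)
        qed simp
      qed
      show "AE t in lborel. norm (indicator {0<..} t *\<^sub>R (t powr (Y i - 1) * h t)) \<le> ?w t" for i
      proof (rule AE_I2)
        fix t :: real
        show "norm (indicator {0<..} t *\<^sub>R (t powr (Y i - 1) * h t)) \<le> ?w t"
        proof (cases "t > 0")
          case True
          have "t powr (Y i - 1) * \<bar>h t\<bar> \<le> (t powr (a - 1) + t powr (b - 1)) * \<bar>h t\<bar>"
            using powr_bound[OF True Yab] by (intro mult_right_mono) auto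
          then show ?thesis using True by (simp add: abs_mult algebra_simps)
        qed simp
      qed
    qed
    have ev: "eventually (\<lambda>i. Y i = X i) sequentially"
    proof -
      have "eventually (\<lambda>i. a < X i) sequentially" using order_tendstoD(1)[OF X ax] .
      moreover have "eventually (\<lambda>i. X i < b) sequentially" using order_tendstoD(2)[OF X xb] .
      ultimately show ?thesis by eventually_elim (auto simp: Y_def)
    qed
    have ev2: "eventually (\<lambda>i. ?F (Y i) = ?F (X i)) sequentially"
      using ev by (rule eventually_mono) simp
    have "(\<lambda>i. ?F (X i)) \<longlonglongrightarrow> ?F x"
      by (rule Lim_transform_eventually[OF limY ev2])
    then show ?thesis by (simp add: o_def)
  qed
  then show ?thesis by (simp add: continuous_at_sequentially)
qed

lemma scale_int:
  fixes f :: "real \<Rightarrow> real" and l :: real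
  assumes l: "l > 0"
  shows "set_integrable lborel {0<..} (\<lambda>t. f (l * t)) \<longleftrightarrow> set_integrable lborel {0<..} f"
    and "(LINT t:{0<..}|lborel. f (l * t)) = (LINT t:{0<..}|lborel. f t) / l"
proof -
  let ?g = "\<lambda>t. indicator {0<..} t *\<^sub>R f t"
  have eq: "(\<lambda>t. ?g (0 + l * t)) = (\<lambda>t. indicator {0<..} t *\<^sub>R f (l * t))"
    using l by (auto simp: indicator_def zero_less_mult_iff)
  show "set_integrable lborel {0<..} (\<lambda>t. f (l * t)) \<longleftrightarrow> set_integrable lborel {0<..} f"
    unfolding set_integrable_def
    using lborel_integrable_real_affine_iff[of l ?g 0] l eq by simp
  have "integral\<^sup>L lborel ?g = \<bar>l\<bar> *\<^sub>R integral\<^sup>L lborel (\<lambda>t. ?g (0 + l * t))"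
    using l by (intro lborel_integral_real_affine) simp
  then show "(LINT t:{0<..}|lborel. f (l * t)) = (LINT t:{0<..}|lborel. f t) / l"
    unfolding set_lebesgue_integral_def using l eq by simp
qed

lemma crossing:
  fixes f :: "real \<Rightarrow> real"
  assumes fm[measurable]: "f \<in> borel_measurable borel"
  and ia: "set_integrable lborel {0<..} (\<lambda>t. t powr (a - 1) * f t)"
  and ib: "set_integrable lborel {0<..} (\<lambda>t. t powr (b - 1) * f t)"
  and ab: "a < b"
  and z: "(LINT t:{0<..}|lborel. t powr (a - 1) * f t) = 0"
  and cr: "\<And>t s. 0 < t \<Longrightarrow> 0 < s \<Longrightarrow> f t > 0 \<Longrightarrow> f s < 0 \<Longrightarrow> t < s"
  shows "(LINT t:{0<..}|lborel. t powr (b - 1) * f t) \<le> 0"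
proof -
  define T where "T = {t. 0 < t \<and> f t < 0}"
  show ?thesis
  proof (cases "T = {}")
    case True
    then have nn: "f t \<ge> 0" if "t > 0" for t using that by (force simp: T_def)
    have "integral\<^sup>L lborel (\<lambda>t. indicator {0<..} t *\<^sub>R (t powr (a - 1) * f t)) = 0"
      using z unfolding set_lebesgue_integral_def .
    then have "AE t in lborel. indicator {0<..} t *\<^sub>R (t powr (a - 1) * f t) = 0"
      using ia nn unfolding set_integrable_def
      by (subst (asm) integral_nonneg_eq_0_iff_AE) (auto simp: indicator_def intro!: AE_I2)
    then have "AE t in lborel. indicator {0<..} t *\<^sub>R (t powr (b - 1) * f t) = 0"
      by (rule eventually_mono) (auto simp: indicator_def split: if_splits)
    then have "(LINT t:{0<..}|lborel. t powr (b - 1) * f t) = 0"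
      unfolding set_lebesgue_integral_def by (rule integral_eq_zero_AE)
    then show ?thesis by simp
  next
    case False
    define s where "s = Inf T"
    have bdd: "bdd_below T" unfolding T_def by (rule bdd_belowI[of _ 0]) auto
    have s0: "s \<ge> 0" unfolding s_def using False by (intro cInf_greatest) (auto simp: T_def)
    define g where "g = b - a"
    have g: "g > 0" using ab by (simp add: g_def)
    have pt: "t powr (b - 1) * f t - s powr g * (t powr (a - 1) * f t) \<le> 0" if t: "t > 0" for t
    proof -
      have eq: "t powr (b - 1) * f t - s powr g * (t powr (a - 1) * f t)
            = (t powr (a - 1) * f t) * (t powr g - s powr g)"
        using t by (simp add: g_def algebra_simps flip: powr_add)
      have tp: "t powr (a - 1) > 0" using t by simp
      consider "f t > 0" | "f t < 0" | "f t = 0" by linarith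
      then show ?thesis
      proof cases
        case 1
        have "t \<le> s" unfolding s_def using False
        proof (intro cInf_greatest)
          fix x assume "x \<in> T"
          then show "t \<le> x" using cr[OF t _ 1] by (auto simp: T_def intro: less_imp_le)
        qed
        then have "t powr g \<le> s powr g" using g t by (intro powr_mono2) auto
        moreover have "t powr (a - 1) * f t > 0" using tp 1 by simp
        ultimately show ?thesis unfolding eq by (simp add: mult_nonneg_nonpos)
      next
        case 2
        then have "t \<in> T" using t by (simp add: T_def)
        then have "s \<le> t" unfolding s_def using bdd by (rule cInf_lower)
        then have "s powr g \<le> t powr g" using g s0 by (intro powr_mono2) auto
        moreover have "t powr (a - 1) * f t < 0" using tp 2 by (simp add: mult_pos_neg)
        ultimately show ?thesis unfolding eq by (simp add: mult_nonpos_nonneg)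
      qed (simp add: eq)
    qed
    have "(LINT t:{0<..}|lborel. t powr (b - 1) * f t) - s powr g * (LINT t:{0<..}|lborel. t powr (a - 1) * f t)
        = (LINT t:{0<..}|lborel. t powr (b - 1) * f t - s powr g * (t powr (a - 1) * f t))"
      using ia ib by (subst set_integral_diff(2)) auto
    also have "\<dots> \<le> (LINT (t::real):{0<..}|lborel. (0::real))"
    proof (rule set_integral_mono)
      show "set_integrable lborel {0<..} (\<lambda>t. t powr (b - 1) * f t - s powr g * (t powr (a - 1) * f t))"
        using ia ib by (intro set_integral_diff(1) set_integrable_mult_right) auto
      show "set_integrable lborel {0<..} (\<lambda>t::real. 0::real)" by (simp add: set_integrable_def)
    qed (use pt in auto)
    finally show ?thesis using z by (simp add: set_lebesgue_integral_def)
  qed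
qed

lemma pos_int:
  fixes g :: "real \<Rightarrow> real"
  assumes int: "set_integrable lborel {0<..} g"
  and nn: "\<And>t. t > 0 \<Longrightarrow> g t \<ge> 0"
  and pq: "0 \<le> p" "p < q"
  and pos: "\<And>t. p < t \<Longrightarrow> t \<le> q \<Longrightarrow> g t > 0"
  shows "(LINT t:{0<..}|lborel. g t) > 0"
proof -
  have ge: "(LINT t:{0<..}|lborel. g t) \<ge> 0"
    unfolding set_lebesgue_integral_def using nn
    by (intro integral_nonneg_AE AE_I2) (auto simp: indicator_def)
  have "(LINT t:{0<..}|lborel. g t) \<noteq> 0"
  proof
    assume "(LINT t:{0<..}|lborel. g t) = 0"
    then have "AE t in lborel. indicator {0<..} t *\<^sub>R g t = 0"
      using int nn unfolding set_integrable_def set_lebesgue_integral_def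
      by (subst (asm) integral_nonneg_eq_0_iff_AE) (auto simp: indicator_def intro!: AE_I2)
    then have "AE t in lborel. t \<notin> {p<..q}"
      by (rule eventually_mono) (use pq pos in \<open>fastforce simp: indicator_def split: if_splits\<close>)
    then have "{p<..q} \<in> null_sets lborel" by (subst AE_iff_null_sets) auto
    then have "emeasure lborel {p<..q} = 0" by auto
    then show False using pq by simp
  qed
  then show ?thesis using ge by simp
qed

lemma pow_0_1:
  fixes x :: real
  assumes x: "x > 0"
  shows "set_integrable lborel {0<..1} (\<lambda>t. t powr (x - 1))"
    and "(LINT t:{0<..1}|lborel. t powr (x - 1)) = 1 / x"
proof -
  let ?f = "\<lambda>t. indicator {0<..1} t *\<^sub>R t powr (x - 1)"
  have "((\<lambda>t. t powr (x - 1)) has_integral (1 powr (x - 1 + 1) / (x - 1 + 1))) {0..1}"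
    using x by (intro has_integral_powr_from_0) auto
  then have "((\<lambda>t. t powr (x - 1)) has_integral 1 / x) {0..1}" using x by simp
  then have "((\<lambda>t. if t \<in> {0..1} then t powr (x - 1) else 0) has_integral 1 / x) UNIV"
    by (simp only: has_integral_restrict_UNIV)
  moreover have "(\<lambda>t. if t \<in> {0..1} then t powr (x - 1) else 0) = ?f"
    by (auto simp: indicator_def fun_eq_iff)
  ultimately have hi: "(?f has_integral 1 / x) UNIV" by simp
  have m: "?f \<in> borel_measurable borel" by measurable
  have nn: "integral\<^sup>N lborel ?f = 1 / x"
    using hi by (intro nn_integral_has_integral_lborel m) (auto simp: indicator_def)
  show i: "set_integrable lborel {0<..1} (\<lambda>t. t powr (x - 1))"
    unfolding set_integrable_def
    by (rule integrableI_nonneg) (use m nn in \<open>auto simp: indicator_def intro!: AE_I2\<close>)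
  show "(LINT t:{0<..1}|lborel. t powr (x - 1)) = 1 / x"
    unfolding set_lebesgue_integral_def
    using m nn x by (subst integral_eq_nn_integral) (auto simp: indicator_def intro!: AE_I2)
qed

lemma pow_1_inf:
  fixes x :: real
  assumes x: "x < 0"
  shows "set_integrable lborel {1<..} (\<lambda>t. t powr (x - 1))"
    and "(LINT t:{1<..}|lborel. t powr (x - 1)) = - 1 / x"
proof -
  let ?f = "\<lambda>t. indicator {1<..} t *\<^sub>R t powr (x - 1)"
  have "((\<lambda>t. t powr (x - 1)) has_integral (-(1 powr (x - 1 + 1)) / (x - 1 + 1))) {1..}"
    using x by (intro has_integral_powr_to_inf) auto
  then have "((\<lambda>t. t powr (x - 1)) has_integral - 1 / x) {1..}" using x by simp
  then have "((\<lambda>t. if t \<in> {1..} then t powr (x - 1) else 0) has_integral - 1 / x) UNIV"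
    by (simp only: has_integral_restrict_UNIV)
  moreover have "((\<lambda>t. if t \<in> {1..} then t powr (x - 1) else 0) has_integral - 1 / x) UNIV
     \<longleftrightarrow> (?f has_integral - 1 / x) UNIV"
    by (rule has_integral_spike_finite_eq[of "{1}"]) (auto simp: indicator_def)
  ultimately have hi: "(?f has_integral - 1 / x) UNIV" by simp
  have m: "?f \<in> borel_measurable borel" by measurable
  have nn: "integral\<^sup>N lborel ?f = - 1 / x"
    using hi by (intro nn_integral_has_integral_lborel m) (auto simp: indicator_def)
  show i: "set_integrable lborel {1<..} (\<lambda>t. t powr (x - 1))"
    unfolding set_integrable_def
    by (rule integrableI_nonneg) (use m nn in \<open>auto simp: indicator_def intro!: AE_I2\<close>)
  show "(LINT t:{1<..}|lborel. t powr (x - 1)) = - 1 / x"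
    unfolding set_lebesgue_integral_def
    using m nn x by (subst integral_eq_nn_integral) (auto simp: indicator_def intro!: AE_I2)
qed

lemma si_bound:
  fixes f g :: "real \<Rightarrow> real"
  assumes g: "set_integrable lborel {0<..} g" and fm: "f \<in> borel_measurable borel"
  and b: "\<And>t. t > 0 \<Longrightarrow> \<bar>f t\<bar> \<le> g t"
  shows "set_integrable lborel {0<..} f"
  unfolding set_integrable_def
proof (rule Bochner_Integration.integrable_bound)
  show "integrable lborel (\<lambda>t. indicator {0<..} t *\<^sub>R g t)" using g unfolding set_integrable_def .
  show "(\<lambda>t. indicator {0<..} t *\<^sub>R f t) \<in> borel_measurable lborel" using fm by measurable
  show "AE t in lborel. norm (indicator {0<..} t *\<^sub>R f t) \<le> norm (indicator {0<..} t *\<^sub>R g t)"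
    by (rule AE_I2) (use b in \<open>force simp: indicator_def\<close>)
qed

lemma sint_nonneg:
  fixes f :: "real \<Rightarrow> real"
  assumes "\<And>t. t \<in> A \<Longrightarrow> 0 \<le> f t"
  shows "0 \<le> (LINT t:A|lborel. f t)"
  unfolding set_lebesgue_integral_def using assms
  by (intro integral_nonneg_AE AE_I2) (auto simp: indicator_def)

lemma split01:
  fixes f :: "real \<Rightarrow> real"
  assumes "set_integrable lborel {0<..} f"
  shows "set_integrable lborel {0<..1} f" "set_integrable lborel {1<..} f"
    "(LINT t:{0<..}|lborel. f t) = (LINT t:{0<..1}|lborel. f t) + (LINT t:{1<..}|lborel. f t)"
proof -
  show i1: "set_integrable lborel {0<..1} f" by (rule set_integrable_subset[OF assms]) auto
  show i2: "set_integrable lborel {1<..} f" by (rule set_integrable_subset[OF assms]) auto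
  have u: "{0<..} = {0<..1} \<union> {1::real<..}" by auto
  show "(LINT t:{0<..}|lborel. f t) = (LINT t:{0<..1}|lborel. f t) + (LINT t:{1<..}|lborel. f t)"
    unfolding u by (rule set_integral_Un[OF _ i1 i2]) auto
qed

locale zset =
  fixes W P :: "real \<Rightarrow> real" and t1 :: real
  assumes W_anti: "antimono W"
  and W_nn: "\<And>t. W t \<ge> 0"
  and W_pos_int: "\<And>\<alpha>. \<alpha> > 0 \<Longrightarrow>
          set_integrable lborel {0<..} (\<lambda>t. t powr (\<alpha> - 1) * W t) \<and>
          0 < (LINT t:{0<..}|lborel. t powr (\<alpha> - 1) * W t)"
  and W_neg_int: "\<And>\<alpha>. -1 < \<alpha> \<Longrightarrow> \<alpha> < 0 \<Longrightarrow>
          set_integrable lborel {0<..} (\<lambda>t. t powr (\<alpha> - 1) * (W 0 - W t)) \<and>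
          0 < (LINT t:{0<..}|lborel. t powr (\<alpha> - 1) * (W 0 - W t))"
  and P_mono: "mono P"
  and P_nn: "\<And>t. P t \<ge> 0"
  and t1: "t1 > 0" "P t1 > 0"
  and P_q: "mono_on {0<..} (\<lambda>t. P t / t)"
begin

lemma W_le: "x \<le> y \<Longrightarrow> W y \<le> W x"
  using W_anti by (auto simp: antimono_def)

lemma P_le: "x \<le> y \<Longrightarrow> P x \<le> P y"
  using P_mono by (auto simp: mono_def)

lemma W_meas[measurable]: "W \<in> borel_measurable borel"
proof -
  have "mono (\<lambda>t. - W t)" using W_anti by (auto simp: mono_def antimono_def)
  then have "(\<lambda>t. - (- W t)) \<in> borel_measurable borel"
    by (intro borel_measurable_uminus borel_measurable_mono)
  then show ?thesis by simp
qed

lemma P_meas[measurable]: "P \<in> borel_measurable borel"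
  using P_mono by (rule borel_measurable_mono)

definition "c = P t1 / t1"

lemma c_pos: "c > 0" using t1 by (simp add: c_def)

lemma Pc_ge: "t \<ge> t1 \<Longrightarrow> P t \<ge> c * t"
proof -
  assume t: "t \<ge> t1"
  then have "P t1 / t1 \<le> P t / t" using t1 P_q by (auto simp: mono_on_def)
  then show ?thesis using t t1 by (simp add: c_def field_simps)
qed

lemma Pc_le: "0 < t \<Longrightarrow> t \<le> t1 \<Longrightarrow> P t \<le> c * t"
proof -
  assume t: "0 < t" "t \<le> t1"
  then have "P t / t \<le> P t1 / t1" using t1 P_q by (auto simp: mono_on_def)
  then show ?thesis using t t1 by (simp add: c_def field_simps)
qed

lemma ex_eps: "\<exists>e>0. W e > 0"
proof (rule ccontr)
  assume "\<not> ?thesis"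
  then have z: "W t = 0" if "t > 0" for t using W_nn[of t] that by force
  have "(LINT t:{0<..}|lborel. t powr (1 - 1) * W t) = (LINT (t::real):{0<..}|lborel. (0::real))"
    by (rule set_lebesgue_integral_cong) (auto simp: z)
  then show False using W_pos_int[of 1] by (simp add: set_lebesgue_integral_def)
qed

lemma ex_T: "\<exists>T>0. W T < W 0"
proof (rule ccontr)
  assume "\<not> ?thesis"
  then have z: "W 0 - W t = 0" if "t > 0" for t using W_le[of 0 t] that by force
  have "(LINT t:{0<..}|lborel. t powr (- 1 / 2 - 1) * (W 0 - W t)) = (LINT (t::real):{0<..}|lborel. (0::real))"
    by (rule set_lebesgue_integral_cong) (auto simp: z)
  then show False using W_neg_int[of "-1/2"] by (simp add: set_lebesgue_integral_def)
qed

lemma W0_pos: "W 0 > 0"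
  using ex_eps W_le[of 0] by (meson less_le_trans order_less_imp_le)

definition "Cst \<alpha> = (if \<alpha> > 0 then 0 else W 0)"
definition "dm \<alpha> \<longleftrightarrow> \<alpha> > 0 \<or> (-1 < \<alpha> \<and> \<alpha> < 0)"
definition "N \<alpha> = (LINT t:{0<..}|lborel. t powr (\<alpha> - 1) * (W (P t) - Cst \<alpha>))"
definition "D \<alpha> = (LINT t:{0<..}|lborel. t powr (\<alpha> - 1) * (W t - Cst \<alpha>))"
definition "E \<alpha> = (LINT t:{0<..}|lborel. t powr (\<alpha> - 1) * (W (P t) - W t))"

lemma D_int: "dm \<alpha> \<Longrightarrow> set_integrable lborel {0<..} (\<lambda>t. t powr (\<alpha> - 1) * (W t - Cst \<alpha>))"
proof -
  assume "dm \<alpha>"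
  then consider "\<alpha> > 0" | "-1 < \<alpha>" "\<alpha> < 0" unfolding dm_def by auto
  then show ?thesis
  proof cases
    case 1 then show ?thesis using W_pos_int[of \<alpha>] by (simp add: Cst_def)
  next
    case 2
    then have "set_integrable lborel {0<..} (\<lambda>t. (-1) * (t powr (\<alpha> - 1) * (W 0 - W t)))"
      using W_neg_int[of \<alpha>] by (intro set_integrable_mult_right) auto
    then show ?thesis using 2 by (simp add: Cst_def algebra_simps)
  qed
qed

lemma D_sign: "\<alpha> > 0 \<Longrightarrow> D \<alpha> > 0" "-1 < \<alpha> \<Longrightarrow> \<alpha> < 0 \<Longrightarrow> D \<alpha> < 0"
proof -
  assume "\<alpha> > 0" then show "D \<alpha> > 0" using W_pos_int[of \<alpha>] by (simp add: D_def Cst_def)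
next
  assume a: "-1 < \<alpha>" "\<alpha> < 0"
  have "D \<alpha> = (LINT t:{0<..}|lborel. (-1) * (t powr (\<alpha> - 1) * (W 0 - W t)))"
    unfolding D_def Cst_def using a by (intro set_lebesgue_integral_cong) (auto simp: algebra_simps)
  also have "\<dots> = - (LINT t:{0<..}|lborel. t powr (\<alpha> - 1) * (W 0 - W t))"
    by (simp only: set_integral_mult_right)
  finally show "D \<alpha> < 0" using W_neg_int[OF a] by simp
qed

lemma scale:
  assumes d: "dm \<alpha>" and l: "l > 0"
  shows "set_integrable lborel {0<..} (\<lambda>t. t powr (\<alpha> - 1) * (W (l * t) - Cst \<alpha>))"
    and "(LINT t:{0<..}|lborel. t powr (\<alpha> - 1) * (W (l * t) - Cst \<alpha>)) = l powr (- \<alpha>) * D \<alpha>"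
proof -
  define g where "g s = s powr (\<alpha> - 1) * (W s - Cst \<alpha>)" for s
  have eq: "t powr (\<alpha> - 1) * (W (l * t) - Cst \<alpha>) = l powr (1 - \<alpha>) * g (l * t)" if "t > 0" for t
    using that l by (simp add: g_def powr_mult powr_diff powr_minus field_simps)
  have gi: "set_integrable lborel {0<..} g" unfolding g_def[abs_def] using D_int[OF d] .
  have gli: "set_integrable lborel {0<..} (\<lambda>t. g (l * t))" using scale_int(1)[OF l, of g] gi by simp
  have "set_integrable lborel {0<..} (\<lambda>t. l powr (1 - \<alpha>) * g (l * t))"
    using gli by (intro set_integrable_mult_right) auto
  then show "set_integrable lborel {0<..} (\<lambda>t. t powr (\<alpha> - 1) * (W (l * t) - Cst \<alpha>))"
    by (rule set_integrable_cong[THEN iffD1, rotated -1]) (auto simp: eq)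
  have "(LINT t:{0<..}|lborel. t powr (\<alpha> - 1) * (W (l * t) - Cst \<alpha>))
      = (LINT t:{0<..}|lborel. l powr (1 - \<alpha>) * g (l * t))"
    by (rule set_lebesgue_integral_cong) (auto simp: eq)
  also have "\<dots> = l powr (1 - \<alpha>) * ((LINT t:{0<..}|lborel. g t) / l)"
    using scale_int(2)[OF l, of g] by simp
  also have "\<dots> = l powr (- \<alpha>) * D \<alpha>"
    using l by (simp add: D_def g_def powr_diff powr_minus field_simps)
  finally show "(LINT t:{0<..}|lborel. t powr (\<alpha> - 1) * (W (l * t) - Cst \<alpha>)) = l powr (- \<alpha>) * D \<alpha>" .
qed


lemma ptA:
  assumes e: "e > 0" "W e > 0" and t: "t > 0"
  shows "W (P t) \<le> W (c * t) + (W 0 / W e) * W ((e / t1) * t)"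
proof (cases "t \<ge> t1")
  case True
  then have "W (P t) \<le> W (c * t)" using Pc_ge W_le by blast
  moreover have "(W 0 / W e) * W ((e / t1) * t) \<ge> 0" using W_nn e by simp
  ultimately show ?thesis by linarith
next
  case False
  have "W (P t) \<le> W 0" using W_le P_nn by blast
  moreover have "(e / t1) * t \<le> e" using False t1 e t by (simp add: field_simps)
  then have "W e \<le> W ((e / t1) * t)" using W_le by blast
  then have "(W 0 / W e) * W e \<le> (W 0 / W e) * W ((e / t1) * t)"
    using W_nn e by (intro mult_left_mono) auto
  then have "W 0 \<le> (W 0 / W e) * W ((e / t1) * t)" using e by simp
  moreover have "W (c * t) \<ge> 0" by (rule W_nn)
  ultimately show ?thesis by linarith
qed

lemma ptB:
  assumes T: "T > 0" "W T < W 0" and t: "t > 0"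
  shows "W 0 - W (P t) \<le> (W 0 - W (c * t)) + (W 0 / (W 0 - W T)) * (W 0 - W ((T / t1) * t))"
proof (cases "t \<le> t1")
  case True
  then have "W (c * t) \<le> W (P t)" using Pc_le t W_le by blast
  moreover have "W ((T / t1) * t) \<le> W 0" using W_le T t t1 by simp
  then have "(W 0 / (W 0 - W T)) * (W 0 - W ((T / t1) * t)) \<ge> 0"
    using T W_nn[of 0] by (intro mult_nonneg_nonneg divide_nonneg_pos) auto
  ultimately show ?thesis by linarith
next
  case False
  have "(T / t1) * t \<ge> T" using False t1 T t by (simp add: field_simps)
  then have "W ((T / t1) * t) \<le> W T" using W_le by blast
  then have "(W 0 / (W 0 - W T)) * (W 0 - W T) \<le> (W 0 / (W 0 - W T)) * (W 0 - W ((T / t1) * t))"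
    using W_nn T by (intro mult_left_mono) auto
  then have "W 0 \<le> (W 0 / (W 0 - W T)) * (W 0 - W ((T / t1) * t))" using T by simp
  moreover have "W (c * t) \<le> W 0" using W_le c_pos t by simp
  moreover have "W (P t) \<ge> 0" by (rule W_nn)
  ultimately show ?thesis by linarith
qed

lemma N_int:
  assumes d: "dm \<alpha>"
  shows "set_integrable lborel {0<..} (\<lambda>t. t powr (\<alpha> - 1) * (W (P t) - Cst \<alpha>))"
proof -
  obtain e where e: "e > 0" "W e > 0" using ex_eps by blast
  obtain T where T: "T > 0" "W T < W 0" using ex_T by blast
  define l where "l = (if \<alpha> > 0 then e / t1 else T / t1)"
  define K where "K = (if \<alpha> > 0 then W 0 / W e else W 0 / (W 0 - W T))"
  have l: "l > 0" using e T t1 by (simp add: l_def)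
  have K: "K \<ge> 0" using e T W0_pos by (simp add: K_def)
  let ?u1 = "\<lambda>t. t powr (\<alpha> - 1) * (W (c * t) - Cst \<alpha>)"
  let ?u2 = "\<lambda>t. t powr (\<alpha> - 1) * (W (l * t) - Cst \<alpha>)"
  have gi: "set_integrable lborel {0<..} (\<lambda>t. \<bar>?u1 t\<bar> + K * \<bar>?u2 t\<bar>)"
    using scale(1)[OF d c_pos] scale(1)[OF d l]
    by (intro set_integral_add(1) set_integrable_abs set_integrable_mult_right) auto
  show ?thesis
  proof (rule si_bound[OF gi])
    show "(\<lambda>t. t powr (\<alpha> - 1) * (W (P t) - Cst \<alpha>)) \<in> borel_measurable borel" by measurable
    fix t :: real assume t: "t > 0"
    have tp: "t powr (\<alpha> - 1) > 0" using t by simp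
    have "\<bar>W (P t) - Cst \<alpha>\<bar> \<le> \<bar>W (c * t) - Cst \<alpha>\<bar> + K * \<bar>W (l * t) - Cst \<alpha>\<bar>"
    proof (cases "\<alpha> > 0")
      case True
      then show ?thesis using ptA[OF e t] W_nn by (simp add: Cst_def K_def l_def)
    next
      case False
      have "W (P t) \<le> W 0" "W (c * t) \<le> W 0" "W (l * t) \<le> W 0"
        using W_le P_nn c_pos l t by (auto simp: zero_le_mult_iff)
      then show ?thesis using ptB[OF T t] False by (simp add: Cst_def K_def l_def)
    qed
    then have "t powr (\<alpha> - 1) * \<bar>W (P t) - Cst \<alpha>\<bar> \<le> t powr (\<alpha> - 1) * (\<bar>W (c * t) - Cst \<alpha>\<bar> + K * \<bar>W (l * t) - Cst \<alpha>\<bar>)"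
      using tp by (intro mult_left_mono) auto
    also have "\<dots> = t powr (\<alpha> - 1) * \<bar>W (c * t) - Cst \<alpha>\<bar> + K * (t powr (\<alpha> - 1) * \<bar>W (l * t) - Cst \<alpha>\<bar>)"
      by (simp add: algebra_simps)
    finally have ineq: "t powr (\<alpha> - 1) * \<bar>W (P t) - Cst \<alpha>\<bar> \<le> t powr (\<alpha> - 1) * \<bar>W (c * t) - Cst \<alpha>\<bar> + K * (t powr (\<alpha> - 1) * \<bar>W (l * t) - Cst \<alpha>\<bar>)" .
    have e0: "\<bar>t powr (\<alpha> - 1) * (W (P t) - Cst \<alpha>)\<bar> = t powr (\<alpha> - 1) * \<bar>W (P t) - Cst \<alpha>\<bar>"
      using tp by (simp add: abs_mult)
    have e1: "\<bar>?u1 t\<bar> = t powr (\<alpha> - 1) * \<bar>W (c * t) - Cst \<alpha>\<bar>"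
      using tp by (simp add: abs_mult)
    have e2: "\<bar>?u2 t\<bar> = t powr (\<alpha> - 1) * \<bar>W (l * t) - Cst \<alpha>\<bar>"
      using tp by (simp add: abs_mult)
    show "\<bar>t powr (\<alpha> - 1) * (W (P t) - Cst \<alpha>)\<bar> \<le> \<bar>?u1 t\<bar> + K * \<bar>?u2 t\<bar>"
      unfolding e0 e1 e2 by (rule ineq)
  qed
qed

lemma N_sign: "\<alpha> > 0 \<Longrightarrow> N \<alpha> > 0" "-1 < \<alpha> \<Longrightarrow> \<alpha> < 0 \<Longrightarrow> N \<alpha> < 0"
proof -
  assume a: "\<alpha> > 0"
  obtain e where e: "e > 0" "W e > 0" using ex_eps by blast
  have "(LINT t:{0<..}|lborel. t powr (\<alpha> - 1) * (W (P t) - Cst \<alpha>)) > 0"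
  proof (rule pos_int)
    show "set_integrable lborel {0<..} (\<lambda>t. t powr (\<alpha> - 1) * (W (P t) - Cst \<alpha>))"
      using a by (intro N_int) (simp add: dm_def)
    show "0 \<le> t powr (\<alpha> - 1) * (W (P t) - Cst \<alpha>)" if "t > 0" for t
      using a W_nn by (simp add: Cst_def)
    show "0 \<le> (0::real)" by simp
    show "0 < min t1 (e / c)" using t1 e c_pos by simp
    fix t :: real assume t: "0 < t" "t \<le> min t1 (e / c)"
    then have "P t \<le> c * t" using Pc_le by simp
    also have "c * t \<le> e" using t c_pos by (simp add: field_simps)
    finally have "W e \<le> W (P t)" using W_le by blast
    then show "0 < t powr (\<alpha> - 1) * (W (P t) - Cst \<alpha>)"
      using t a e by (simp add: Cst_def)
  qed
  then show "N \<alpha> > 0" by (simp add: N_def)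
next
  assume a: "-1 < \<alpha>" "\<alpha> < 0"
  obtain T where T: "T > 0" "W T < W 0" using ex_T by blast
  define q where "q = max t1 (T / c)"
  have Ni: "set_integrable lborel {0<..} (\<lambda>t. t powr (\<alpha> - 1) * (W (P t) - Cst \<alpha>))"
    using a by (intro N_int) (simp add: dm_def)
  have "(LINT t:{0<..}|lborel. (-1) * (t powr (\<alpha> - 1) * (W (P t) - Cst \<alpha>))) > 0"
  proof (rule pos_int)
    show "set_integrable lborel {0<..} (\<lambda>t. (-1) * (t powr (\<alpha> - 1) * (W (P t) - Cst \<alpha>)))"
      using Ni by (intro set_integrable_mult_right) auto
    show "0 \<le> (-1) * (t powr (\<alpha> - 1) * (W (P t) - Cst \<alpha>))" if "t > 0" for t
      using a W_le[of 0 "P t"] P_nn[of t] that by (simp add: Cst_def mult_nonneg_nonpos)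
    show "0 \<le> q" using t1 by (simp add: q_def)
    show "q < q + 1" by simp
    fix t :: real assume t: "q < t" "t \<le> q + 1"
    then have tt: "t > t1" "t > T / c" by (auto simp: q_def)
    then have "P t \<ge> c * t" using Pc_ge by simp
    moreover have "c * t > T" using tt c_pos by (simp add: field_simps)
    ultimately have "W (P t) \<le> W T" using W_le by simp
    then show "0 < (-1) * (t powr (\<alpha> - 1) * (W (P t) - Cst \<alpha>))"
      using t tt t1 a T by (simp add: Cst_def mult_pos_neg)
  qed
  then show "N \<alpha> < 0" unfolding N_def by (simp only: set_integral_mult_right)
qed


lemma Z_eq: "dm \<alpha> \<Longrightarrow> zeta W P \<alpha> = (N \<alpha> / D \<alpha>) powr (1 / \<alpha>)"
  unfolding zeta_def N_def D_def Cst_def dm_def by auto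

lemma ND_pos: "dm \<alpha> \<Longrightarrow> N \<alpha> / D \<alpha> > 0"
  unfolding dm_def using N_sign D_sign by (auto intro: divide_pos_pos divide_neg_neg)

lemma Z_pos: "dm \<alpha> \<Longrightarrow> zeta W P \<alpha> > 0"
proof -
  assume d: "dm \<alpha>"
  have "N \<alpha> / D \<alpha> \<noteq> 0" using ND_pos[OF d] by (metis less_irrefl)
  then show ?thesis using Z_eq[OF d] by simp
qed

lemma E_eq: "dm \<alpha> \<Longrightarrow> E \<alpha> = N \<alpha> - D \<alpha>"
proof -
  assume d: "dm \<alpha>"
  have "N \<alpha> - D \<alpha> = (LINT t:{0<..}|lborel. t powr (\<alpha> - 1) * (W (P t) - Cst \<alpha>) - t powr (\<alpha> - 1) * (W t - Cst \<alpha>))"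
    unfolding N_def D_def using N_int[OF d] D_int[OF d] by (rule set_integral_diff(2)[symmetric])
  also have "\<dots> = E \<alpha>" unfolding E_def
    by (rule set_lebesgue_integral_cong) (auto simp: algebra_simps)
  finally show ?thesis by simp
qed

lemma E_int_dm: "dm \<alpha> \<Longrightarrow> set_integrable lborel {0<..} (\<lambda>t. t powr (\<alpha> - 1) * (W (P t) - W t))"
proof -
  assume d: "dm \<alpha>"
  have "set_integrable lborel {0<..} (\<lambda>t. t powr (\<alpha> - 1) * (W (P t) - Cst \<alpha>) - t powr (\<alpha> - 1) * (W t - Cst \<alpha>))"
    using N_int[OF d] D_int[OF d] by (rule set_integral_diff(1))
  then show ?thesis
    by (rule set_integrable_cong[THEN iffD1, rotated -1]) (auto simp: algebra_simps)
qed

lemma E_int: "\<alpha> > -1 \<Longrightarrow> set_integrable lborel {0<..} (\<lambda>t. t powr (\<alpha> - 1) * (W (P t) - W t))"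
proof -
  assume a: "\<alpha> > -1"
  show ?thesis
  proof (cases "\<alpha> = 0")
    case False
    then show ?thesis using a by (intro E_int_dm) (auto simp: dm_def)
  next
    case True
    have i1: "set_integrable lborel {0<..} (\<lambda>t. t powr ((-1/2) - 1) * (W (P t) - W t))"
      by (rule E_int_dm) (simp add: dm_def)
    have i2: "set_integrable lborel {0<..} (\<lambda>t. t powr ((1/2) - 1) * (W (P t) - W t))"
      by (rule E_int_dm) (simp add: dm_def)
    show ?thesis
      by (rule int_interp[OF _ i1 i2]) (use True in auto)
  qed
qed

lemma E_cont: "\<alpha> > -1 \<Longrightarrow> isCont E \<alpha>"
proof -
  assume a: "\<alpha> > -1"
  have i1: "set_integrable lborel {0<..} (\<lambda>t. t powr ((\<alpha> - 1)/2 - 1) * (W (P t) - W t))"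
    by (rule E_int) (use a in simp)
  have i2: "set_integrable lborel {0<..} (\<lambda>t. t powr ((\<alpha> + 1) - 1) * (W (P t) - W t))"
    by (rule E_int) (use a in simp)
  have "isCont (\<lambda>y. LINT t:{0<..}|lborel. t powr (y - 1) * (W (P t) - W t)) \<alpha>"
    by (rule cont_param[OF _ i1 i2]) (use a in auto)
  then show ?thesis unfolding E_def[abs_def] .
qed

lemma Z_cont_dm:
  assumes d: "dm \<alpha>0"
  shows "isCont (zeta W P) \<alpha>0"
proof -
  define a where "a = (if \<alpha>0 > 0 then \<alpha>0 / 2 else (\<alpha>0 - 1) / 2)"
  define b where "b = (if \<alpha>0 > 0 then \<alpha>0 + 1 else \<alpha>0 / 2)"
  have ab: "a < \<alpha>0" "\<alpha>0 < b" using d by (auto simp: a_def b_def dm_def)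
  have dab0: "dm y \<and> Cst y = Cst \<alpha>0" if "a \<le> y" "y \<le> b" for y
  proof (cases "\<alpha>0 > 0")
    case True
    then have "y > 0" using that by (simp add: a_def)
    then show ?thesis using True by (simp add: dm_def Cst_def)
  next
    case False
    then have "-1 < \<alpha>0" "\<alpha>0 < 0" using d by (auto simp: dm_def)
    then have "-1 < y" "y < 0" using that False by (auto simp: a_def b_def)
    then show ?thesis using False by (simp add: dm_def Cst_def)
  qed
  have dab: "dm y" "Cst y = Cst \<alpha>0" if "a \<le> y" "y \<le> b" for y
    using dab0[OF that] by auto
  define F1 where "F1 y = (LINT t:{0<..}|lborel. t powr (y - 1) * (W (P t) - Cst \<alpha>0))" for y
  define F2 where "F2 y = (LINT t:{0<..}|lborel. t powr (y - 1) * (W t - Cst \<alpha>0))" for y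
  have ia: "dm a" "Cst a = Cst \<alpha>0" using dab[of a] ab by simp_all
  have ib: "dm b" "Cst b = Cst \<alpha>0" using dab[of b] ab by simp_all
  have n1: "set_integrable lborel {0<..} (\<lambda>t. t powr (a - 1) * (W (P t) - Cst \<alpha>0))"
    using N_int[OF ia(1)] unfolding ia(2) .
  have n2: "set_integrable lborel {0<..} (\<lambda>t. t powr (b - 1) * (W (P t) - Cst \<alpha>0))"
    using N_int[OF ib(1)] unfolding ib(2) .
  have d1: "set_integrable lborel {0<..} (\<lambda>t. t powr (a - 1) * (W t - Cst \<alpha>0))"
    using D_int[OF ia(1)] unfolding ia(2) .
  have d2: "set_integrable lborel {0<..} (\<lambda>t. t powr (b - 1) * (W t - Cst \<alpha>0))"
    using D_int[OF ib(1)] unfolding ib(2) .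
  have c1: "isCont F1 \<alpha>0" unfolding F1_def[abs_def]
    by (rule cont_param[OF _ n1 n2 ab]) measurable
  have c2: "isCont F2 \<alpha>0" unfolding F2_def[abs_def]
    by (rule cont_param[OF _ d1 d2 ab]) measurable
  have F12: "F1 \<alpha>0 = N \<alpha>0" "F2 \<alpha>0 = D \<alpha>0" unfolding F1_def F2_def N_def D_def by simp_all
  have a0: "\<alpha>0 \<noteq> 0" using d by (auto simp: dm_def)
  have "((\<lambda>y. (F1 y / F2 y) powr (1 / y)) \<longlongrightarrow> (F1 \<alpha>0 / F2 \<alpha>0) powr (1 / \<alpha>0)) (at \<alpha>0)"
  proof (rule tendsto_powr)
    show "((\<lambda>y. F1 y / F2 y) \<longlongrightarrow> F1 \<alpha>0 / F2 \<alpha>0) (at \<alpha>0)"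
      using c1 c2 F12 ND_pos[OF d] by (intro tendsto_divide) (auto simp: isCont_def)
    show "((\<lambda>y. 1 / y) \<longlongrightarrow> 1 / \<alpha>0) (at \<alpha>0)" using a0 by (intro tendsto_intros) auto
    show "F1 \<alpha>0 / F2 \<alpha>0 \<noteq> 0" unfolding F12 using ND_pos[OF d] by (metis less_irrefl)
  qed
  then have cF: "isCont (\<lambda>y. (F1 y / F2 y) powr (1 / y)) \<alpha>0" by (simp add: isCont_def)
  have "eventually (\<lambda>y. y \<in> {a<..<b}) (nhds \<alpha>0)"
    by (rule eventually_nhds[THEN iffD2]) (intro exI[of _ "{a<..<b}"], use ab in auto)
  then have "eventually (\<lambda>y. zeta W P y = (F1 y / F2 y) powr (1 / y)) (nhds \<alpha>0)"
  proof (rule eventually_mono)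
    fix y assume "y \<in> {a<..<b}"
    then have dy: "dm y" "Cst y = Cst \<alpha>0" using dab by auto
    have "N y = F1 y" "D y = F2 y" unfolding N_def D_def F1_def F2_def dy(2) by simp_all
    then show "zeta W P y = (F1 y / F2 y) powr (1 / y)"
      using Z_eq[OF dy(1)] by simp
  qed
  from isCont_cong[OF this] cF show ?thesis by simp
qed

definition "M1 = (LINT t:{0<..1}|lborel. t powr (- 1 / 2 - 1) * (W 0 - W t))"
definition "M2 = (LINT t:{1<..}|lborel. t powr (1 / 2 - 1) * W t)"

lemma M1_int: "set_integrable lborel {0<..1} (\<lambda>t. t powr (- 1 / 2 - 1) * (W 0 - W t))"
  using W_neg_int[of "-1/2"] by (intro split01(1)) auto

lemma M2_int: "set_integrable lborel {1<..} (\<lambda>t. t powr (1 / 2 - 1) * W t)"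
  using W_pos_int[of "1/2"] by (intro split01(2)) auto

lemma aD_pos_bound:
  assumes a: "0 < \<alpha>" "\<alpha> \<le> 1/2"
  shows "\<bar>\<alpha> * D \<alpha> - W 0\<bar> \<le> \<alpha> * (M1 + M2)"
proof -
  have Di: "set_integrable lborel {0<..} (\<lambda>t. t powr (\<alpha> - 1) * W t)" using W_pos_int a by simp
  have DA: "D \<alpha> = (LINT t:{0<..}|lborel. t powr (\<alpha> - 1) * W t)"
    unfolding D_def Cst_def using a by simp
  define A1 where "A1 = (LINT t:{0<..1}|lborel. t powr (\<alpha> - 1) * W t)"
  define A2 where "A2 = (LINT t:{1<..}|lborel. t powr (\<alpha> - 1) * W t)"
  have DA2: "D \<alpha> = A1 + A2" unfolding DA A1_def A2_def by (rule split01(3)[OF Di])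
  have i1: "set_integrable lborel {0<..1} (\<lambda>t. t powr (\<alpha> - 1) * W t)" by (rule split01(1)[OF Di])
  have i2: "set_integrable lborel {1<..} (\<lambda>t. t powr (\<alpha> - 1) * W t)" by (rule split01(2)[OF Di])
  have p: "set_integrable lborel {0<..1} (\<lambda>t. W 0 * t powr (\<alpha> - 1))"
    using pow_0_1(1)[OF a(1)] by (intro set_integrable_mult_right) auto
  have pv: "(LINT t:{0<..1}|lborel. W 0 * t powr (\<alpha> - 1)) = W 0 / \<alpha>"
    using pow_0_1(2)[OF a(1)] by simp
  define I1 where "I1 = (LINT t:{0<..1}|lborel. W 0 * t powr (\<alpha> - 1) - t powr (\<alpha> - 1) * W t)"
  have I1v: "I1 = W 0 / \<alpha> - A1" unfolding I1_def A1_def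
    using set_integral_diff(2)[OF p i1] pv by simp
  have I1i: "set_integrable lborel {0<..1} (\<lambda>t. W 0 * t powr (\<alpha> - 1) - t powr (\<alpha> - 1) * W t)"
    using set_integral_diff(1)[OF p i1] .
  have I1ge: "0 \<le> I1" unfolding I1_def
    by (rule sint_nonneg) (use W_le[of 0] in \<open>auto simp: algebra_simps\<close>)
  have I1le: "I1 \<le> M1" unfolding I1_def M1_def
  proof (rule set_integral_mono[OF I1i M1_int])
    fix t :: real assume t: "t \<in> {0<..1}"
    have "t powr (\<alpha> - 1) \<le> t powr (- 1 / 2 - 1)" using t a by (intro powr_mono') auto
    moreover have "W 0 - W t \<ge> 0" using W_le[of 0 t] t by simp
    ultimately have "t powr (\<alpha> - 1) * (W 0 - W t) \<le> t powr (- 1 / 2 - 1) * (W 0 - W t)"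
      by (rule mult_right_mono)
    then show "W 0 * t powr (\<alpha> - 1) - t powr (\<alpha> - 1) * W t \<le> t powr (- 1 / 2 - 1) * (W 0 - W t)"
      by (simp add: algebra_simps)
  qed
  have A2ge: "0 \<le> A2" unfolding A2_def by (rule sint_nonneg) (use W_nn in auto)
  have A2le: "A2 \<le> M2" unfolding A2_def M2_def
  proof (rule set_integral_mono[OF i2 M2_int])
    fix t :: real assume t: "t \<in> {1<..}"
    have "t powr (\<alpha> - 1) \<le> t powr (1 / 2 - 1)" using t a by (intro powr_mono) auto
    then show "t powr (\<alpha> - 1) * W t \<le> t powr (1 / 2 - 1) * W t"
      using W_nn by (intro mult_right_mono) auto
  qed
  have "\<alpha> * D \<alpha> - W 0 = \<alpha> * (A2 - I1)" using a unfolding DA2 I1v by (simp add: field_simps)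
  then have "\<bar>\<alpha> * D \<alpha> - W 0\<bar> = \<alpha> * \<bar>A2 - I1\<bar>" using a by (simp add: abs_mult)
  also have "\<dots> \<le> \<alpha> * (M1 + M2)" using a I1ge I1le A2ge A2le by (intro mult_left_mono) auto
  finally show ?thesis .
qed

lemma aD_neg_bound:
  assumes a: "- 1 / 2 \<le> \<alpha>" "\<alpha> < 0"
  shows "\<bar>\<alpha> * D \<alpha> - W 0\<bar> \<le> - \<alpha> * (M1 + M2)"
proof -
  have a1: "-1 < \<alpha>" using a by simp
  have Di: "set_integrable lborel {0<..} (\<lambda>t. t powr (\<alpha> - 1) * (W 0 - W t))" using W_neg_int[OF a1 a(2)] by simp
  have DA: "D \<alpha> = - (LINT t:{0<..}|lborel. t powr (\<alpha> - 1) * (W 0 - W t))"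
  proof -
    have "D \<alpha> = (LINT t:{0<..}|lborel. (-1) * (t powr (\<alpha> - 1) * (W 0 - W t)))"
      unfolding D_def Cst_def using a by (intro set_lebesgue_integral_cong) (auto simp: algebra_simps)
    also have "\<dots> = - (LINT t:{0<..}|lborel. t powr (\<alpha> - 1) * (W 0 - W t))"
      by (simp only: set_integral_mult_right)
    finally show ?thesis by simp
  qed
  define J1 where "J1 = (LINT t:{0<..1}|lborel. t powr (\<alpha> - 1) * (W 0 - W t))"
  define B where "B = (LINT t:{1<..}|lborel. t powr (\<alpha> - 1) * (W 0 - W t))"
  have DA2: "D \<alpha> = - (J1 + B)" unfolding DA J1_def B_def by (simp add: split01(3)[OF Di])
  have i1: "set_integrable lborel {0<..1} (\<lambda>t. t powr (\<alpha> - 1) * (W 0 - W t))" by (rule split01(1)[OF Di])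
  have i2: "set_integrable lborel {1<..} (\<lambda>t. t powr (\<alpha> - 1) * (W 0 - W t))" by (rule split01(2)[OF Di])
  have p: "set_integrable lborel {1<..} (\<lambda>t. W 0 * t powr (\<alpha> - 1))"
    using pow_1_inf(1)[OF a(2)] by (intro set_integrable_mult_right) auto
  have pv: "(LINT t:{1<..}|lborel. W 0 * t powr (\<alpha> - 1)) = - W 0 / \<alpha>"
    using pow_1_inf(2)[OF a(2)] by simp
  define J2 where "J2 = (LINT t:{1<..}|lborel. W 0 * t powr (\<alpha> - 1) - t powr (\<alpha> - 1) * (W 0 - W t))"
  have J2i: "set_integrable lborel {1<..} (\<lambda>t. W 0 * t powr (\<alpha> - 1) - t powr (\<alpha> - 1) * (W 0 - W t))"
    using set_integral_diff(1)[OF p i2] .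
  have J2v: "J2 = - W 0 / \<alpha> - B" unfolding J2_def B_def
    using set_integral_diff(2)[OF p i2] pv by simp
  have J1ge: "0 \<le> J1" unfolding J1_def
    by (rule sint_nonneg) (use W_le[of 0] in \<open>auto simp: algebra_simps\<close>)
  have J1le: "J1 \<le> M1" unfolding J1_def M1_def
  proof (rule set_integral_mono[OF i1 M1_int])
    fix t :: real assume t: "t \<in> {0<..1}"
    have "t powr (\<alpha> - 1) \<le> t powr (- 1 / 2 - 1)" using t a by (intro powr_mono') auto
    moreover have "W 0 - W t \<ge> 0" using W_le[of 0 t] t by simp
    ultimately show "t powr (\<alpha> - 1) * (W 0 - W t) \<le> t powr (- 1 / 2 - 1) * (W 0 - W t)"
      by (rule mult_right_mono)
  qed
  have J2ge: "0 \<le> J2" unfolding J2_def by (rule sint_nonneg) (use W_nn in \<open>auto simp: algebra_simps\<close>)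
  have J2le: "J2 \<le> M2" unfolding J2_def M2_def
  proof (rule set_integral_mono[OF J2i M2_int])
    fix t :: real assume t: "t \<in> {1<..}"
    have "t powr (\<alpha> - 1) \<le> t powr (1 / 2 - 1)" using t a by (intro powr_mono) auto
    then have "t powr (\<alpha> - 1) * W t \<le> t powr (1 / 2 - 1) * W t"
      using W_nn by (intro mult_right_mono) auto
    then show "W 0 * t powr (\<alpha> - 1) - t powr (\<alpha> - 1) * (W 0 - W t) \<le> t powr (1 / 2 - 1) * W t"
      by (simp add: algebra_simps)
  qed
  have "\<alpha> * D \<alpha> - W 0 = \<alpha> * (J2 - J1)"
  proof -
    have "B = - W 0 / \<alpha> - J2" using J2v by simp
    then show ?thesis using a unfolding DA2 by (simp add: field_simps)
  qed
  then have "\<bar>\<alpha> * D \<alpha> - W 0\<bar> = - \<alpha> * \<bar>J2 - J1\<bar>" using a by (simp add: abs_mult)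
  also have "\<dots> \<le> - \<alpha> * (M1 + M2)" using a J1ge J1le J2ge J2le by (intro mult_left_mono) auto
  finally show ?thesis .
qed

lemma aD_lim: "((\<lambda>\<alpha>. \<alpha> * D \<alpha>) \<longlongrightarrow> W 0) (at 0)"
proof -
  have "((\<lambda>\<alpha>. \<alpha> * D \<alpha> - W 0) \<longlongrightarrow> 0) (at 0)"
  proof (rule Lim_null_comparison)
    show "eventually (\<lambda>\<alpha>. norm (\<alpha> * D \<alpha> - W 0) \<le> \<bar>\<alpha>\<bar> * (M1 + M2)) (at 0)"
      unfolding eventually_at
    proof (intro exI[of _ "1/2"] conjI allI ballI impI)
      fix \<alpha> :: real assume "\<alpha> \<in> UNIV" "\<alpha> \<noteq> 0 \<and> dist \<alpha> 0 < 1/2"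
      then have h: "\<alpha> \<noteq> 0" "\<bar>\<alpha>\<bar> < 1/2" by auto
      show "norm (\<alpha> * D \<alpha> - W 0) \<le> \<bar>\<alpha>\<bar> * (M1 + M2)"
      proof (cases "\<alpha> > 0")
        case True then show ?thesis using aD_pos_bound[of \<alpha>] h by simp
      next
        case False then show ?thesis using aD_neg_bound[of \<alpha>] h by simp
      qed
    qed simp
    show "((\<lambda>\<alpha>. \<bar>\<alpha>\<bar> * (M1 + M2)) \<longlongrightarrow> 0) (at 0)"
      by (rule tendsto_eq_intros) (auto intro!: tendsto_eq_intros)
  qed
  then show ?thesis by (simp add: LIM_zero_iff)
qed

lemma ln_quot_cont: "isCont (\<lambda>y::real. if y = 0 then 1 else ln (1 + y) / y) 0"
proof -
  have "DERIV (\<lambda>y::real. ln (1 + y)) 0 :> 1"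
    by (rule derivative_eq_intros refl | simp)+
  then have "((\<lambda>h::real. (ln (1 + (0 + h)) - ln (1 + 0)) / h) \<longlongrightarrow> 1) (at 0)"
    by (simp add: DERIV_def)
  then have l: "((\<lambda>h::real. ln (1 + h) / h) \<longlongrightarrow> 1) (at 0)" by simp
  have "eventually (\<lambda>h::real. ln (1 + h) / h = (if h = 0 then 1 else ln (1 + h) / h)) (at 0)"
    by (simp add: eventually_at_filter)
  from Lim_transform_eventually[OF l this] show ?thesis by (simp add: isCont_def)
qed

lemma Z0_eq: "zeta W P 0 = exp (E 0 / W 0)"
proof -
  have "(LINT t:{0<..}|lborel. (W (P t) - W t) / (t * W 0))
      = (LINT t:{0<..}|lborel. t powr (0 - 1) * (W (P t) - W t) / W 0)"
    by (rule set_lebesgue_integral_cong) (auto simp: powr_neg_one)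
  also have "\<dots> = E 0 / W 0" unfolding E_def by (rule set_integral_divide_zero)
  finally show ?thesis unfolding zeta_def by simp
qed

lemma Z_cont0: "isCont (zeta W P) 0"
proof -
  define x where "x \<alpha> = E \<alpha> / (\<alpha> * D \<alpha>)" for \<alpha>
  define G where "G y = (if y = 0 then 1 else ln (1 + y) / y)" for y :: real
  have xl: "(x \<longlongrightarrow> E 0 / W 0) (at 0)" unfolding x_def[abs_def]
  proof (rule tendsto_divide)
    show "(E \<longlongrightarrow> E 0) (at 0)" using E_cont[of 0] by (simp add: isCont_def)
    show "((\<lambda>\<alpha>. \<alpha> * D \<alpha>) \<longlongrightarrow> W 0) (at 0)" by (rule aD_lim)
    show "W 0 \<noteq> 0" using W0_pos by simp
  qed
  have ax: "((\<lambda>\<alpha>. \<alpha> * x \<alpha>) \<longlongrightarrow> 0 * (E 0 / W 0)) (at 0)"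
    by (intro tendsto_mult xl tendsto_ident_at)
  have Gl: "((\<lambda>\<alpha>. G (\<alpha> * x \<alpha>)) \<longlongrightarrow> G 0) (at 0)"
    using isCont_tendsto_compose[OF ln_quot_cont ax[simplified]] by (simp add: G_def)
  have lim: "((\<lambda>\<alpha>. exp (G (\<alpha> * x \<alpha>) * x \<alpha>)) \<longlongrightarrow> exp (G 0 * (E 0 / W 0))) (at 0)"
    by (intro tendsto_exp tendsto_mult Gl xl)
  have ev: "eventually (\<lambda>\<alpha>. exp (G (\<alpha> * x \<alpha>) * x \<alpha>) = zeta W P \<alpha>) (at 0)"
    unfolding eventually_at
  proof (intro exI[of _ "1/2"] conjI allI ballI impI)
    fix \<alpha> :: real assume "\<alpha> \<in> UNIV" "\<alpha> \<noteq> 0 \<and> dist \<alpha> 0 < 1/2"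
    then have h: "\<alpha> \<noteq> 0" "\<bar>\<alpha>\<bar> < 1/2" by auto
    then have d: "dm \<alpha>" by (auto simp: dm_def)
    have Dn: "D \<alpha> \<noteq> 0" using D_sign[of \<alpha>] h by (cases "\<alpha> > 0") auto
    have q: "N \<alpha> / D \<alpha> = 1 + \<alpha> * x \<alpha>"
      using Dn h E_eq[OF d] by (simp add: x_def field_simps)
    have pos: "1 + \<alpha> * x \<alpha> > 0" using ND_pos[OF d] q by simp
    have "zeta W P \<alpha> = exp (ln (1 + \<alpha> * x \<alpha>) / \<alpha>)"
      using Z_eq[OF d] q pos by (simp add: powr_def)
    also have "ln (1 + \<alpha> * x \<alpha>) / \<alpha> = G (\<alpha> * x \<alpha>) * x \<alpha>"
      using h by (cases "x \<alpha> = 0") (auto simp: G_def)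
    finally show "exp (G (\<alpha> * x \<alpha>) * x \<alpha>) = zeta W P \<alpha>" by simp
  qed simp
  have "((zeta W P) \<longlongrightarrow> exp (G 0 * (E 0 / W 0))) (at 0)"
    by (rule Lim_transform_eventually[OF lim ev])
  then show ?thesis by (simp add: isCont_def G_def Z0_eq)
qed

lemma mono_same:
  assumes da: "dm \<alpha>" and db: "dm \<beta>" and ab: "\<alpha> < \<beta>" and sg: "\<alpha> > 0 \<longleftrightarrow> \<beta> > 0"
  shows "zeta W P \<beta> \<le> zeta W P \<alpha>"
proof -
  define z where "z = zeta W P \<alpha>"
  have zp: "z > 0" using Z_pos[OF da] by (simp add: z_def)
  define l where "l = 1 / z"
  have lp: "l > 0" using zp by (simp add: l_def)
  have C: "Cst \<beta> = Cst \<alpha>" using sg by (simp add: Cst_def)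
  have a0: "\<alpha> \<noteq> 0" using da by (auto simp: dm_def)
  have b0: "\<beta> \<noteq> 0" using db by (auto simp: dm_def)
  have ndp: "N \<alpha> / D \<alpha> > 0" by (rule ND_pos[OF da])
  have lpow: "l powr (- \<alpha>) = N \<alpha> / D \<alpha>"
  proof -
    have "l powr (- \<alpha>) = z powr \<alpha>" using zp by (simp add: l_def powr_minus_divide powr_divide)
    also have "\<dots> = (N \<alpha> / D \<alpha>) powr (1 / \<alpha> * \<alpha>)"
      unfolding z_def Z_eq[OF da] by (simp add: powr_powr)
    also have "\<dots> = (N \<alpha> / D \<alpha>) powr 1" using a0 by simp
    also have "\<dots> = N \<alpha> / D \<alpha>" by (rule powr_one) (use ndp in linarith)
    finally show ?thesis .
  qed
  have Dn: "D \<alpha> \<noteq> 0" using ndp by auto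
  define f where "f t = W (P t) - W (l * t)" for t
  have fm: "f \<in> borel_measurable borel" unfolding f_def[abs_def] by measurable
  have fi: "set_integrable lborel {0<..} (\<lambda>t. t powr (\<gamma> - 1) * f t)"
    and fv: "(LINT t:{0<..}|lborel. t powr (\<gamma> - 1) * f t) = N \<gamma> - l powr (- \<gamma>) * D \<gamma>"
    if g: "dm \<gamma>" for \<gamma>
  proof -
    have e: "t powr (\<gamma> - 1) * f t = t powr (\<gamma> - 1) * (W (P t) - Cst \<gamma>) - t powr (\<gamma> - 1) * (W (l * t) - Cst \<gamma>)" for t
      by (simp add: f_def algebra_simps)
    show "set_integrable lborel {0<..} (\<lambda>t. t powr (\<gamma> - 1) * f t)"
      unfolding e by (intro set_integral_diff(1) N_int scale(1) g lp)
    show "(LINT t:{0<..}|lborel. t powr (\<gamma> - 1) * f t) = N \<gamma> - l powr (- \<gamma>) * D \<gamma>"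
      unfolding e N_def scale(2)[OF g lp, symmetric]
      by (intro set_integral_diff(2) N_int scale(1) g lp)
  qed
  have z0: "(LINT t:{0<..}|lborel. t powr (\<alpha> - 1) * f t) = 0"
    unfolding fv[OF da] lpow using Dn by simp
  have cr: "t < s" if t: "0 < t" and s: "0 < s" and ft: "f t > 0" and fs: "f s < 0" for t s
  proof (rule ccontr)
    assume "\<not> t < s"
    then have st: "s \<le> t" by simp
    have "P t < l * t"
    proof (rule ccontr)
      assume "\<not> P t < l * t"
      then have "W (P t) \<le> W (l * t)" using W_le by simp
      then show False using ft by (simp add: f_def)
    qed
    then have q1: "P t / t < l" using t by (simp add: field_simps)
    have "P s > l * s"
    proof (rule ccontr)
      assume "\<not> P s > l * s"
      then have "W (l * s) \<le> W (P s)" using W_le by simp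
      then show False using fs by (simp add: f_def)
    qed
    then have q2: "P s / s > l" using s by (simp add: field_simps)
    have "P s / s \<le> P t / t" using P_q st s t by (auto simp: mono_on_def)
    then show False using q1 q2 by simp
  qed
  have "(LINT t:{0<..}|lborel. t powr (\<beta> - 1) * f t) \<le> 0"
    by (rule crossing[OF fm fi[OF da] fi[OF db] ab z0 cr])
  then have Nle: "N \<beta> \<le> l powr (- \<beta>) * D \<beta>" using fv[OF db] by simp
  have lb: "(l powr (- \<beta>)) powr (1 / \<beta>) = z"
    using b0 lp zp by (simp add: powr_powr l_def powr_minus_divide powr_divide)
  have ndb: "N \<beta> / D \<beta> > 0" by (rule ND_pos[OF db])
  show ?thesis
  proof (cases "\<beta> > 0")
    case True
    have "N \<beta> / D \<beta> \<le> l powr (- \<beta>)" using Nle D_sign(1)[OF True] by (simp add: divide_le_eq)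
    then have "(N \<beta> / D \<beta>) powr (1 / \<beta>) \<le> (l powr (- \<beta>)) powr (1 / \<beta>)"
      using True ndb by (intro powr_mono2) auto
    then show ?thesis unfolding Z_eq[OF db] lb z_def .
  next
    case False
    then have bn: "-1 < \<beta>" "\<beta> < 0" using db b0 by (auto simp: dm_def)
    have "l powr (- \<beta>) \<le> N \<beta> / D \<beta>" using Nle D_sign(2)[OF bn] by (simp add: le_divide_eq)
    then have "(N \<beta> / D \<beta>) powr (1 / \<beta>) \<le> (l powr (- \<beta>)) powr (1 / \<beta>)"
      using bn lp by (intro powr_mono2') auto
    then show ?thesis unfolding Z_eq[OF db] lb z_def .
  qed
qed

lemma Z_le_neg:
  assumes x: "-1 < x" "x < 0"
  shows "zeta W P 0 \<le> zeta W P x"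
proof (rule tendsto_upperbound)
  show "(zeta W P \<longlongrightarrow> zeta W P 0) (at_left 0)"
    using Z_cont0 unfolding isCont_def by (rule tendsto_within_subset) simp
  show "eventually (\<lambda>y. zeta W P y \<le> zeta W P x) (at_left 0)"
    using eventually_at_left_real[OF x(2)]
  proof (rule eventually_mono)
    fix y assume "y \<in> {x<..<0}"
    then show "zeta W P y \<le> zeta W P x" using x
      by (intro mono_same) (auto simp: dm_def)
  qed
qed (simp add: trivial_limit_at_left_real)

lemma Z_le_pos:
  assumes x: "0 < x"
  shows "zeta W P x \<le> zeta W P 0"
proof (rule tendsto_lowerbound)
  show "(zeta W P \<longlongrightarrow> zeta W P 0) (at_right 0)"
    using Z_cont0 unfolding isCont_def by (rule tendsto_within_subset) simp
  show "eventually (\<lambda>y. zeta W P x \<le> zeta W P y) (at_right 0)"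
    using eventually_at_right_real[OF x]
  proof (rule eventually_mono)
    fix y assume "y \<in> {0<..<x}"
    then show "zeta W P x \<le> zeta W P y" using x
      by (intro mono_same) (auto simp: dm_def)
  qed
qed (simp add: trivial_limit_at_right_real)

lemma Z_cont: "continuous_on {-1<..} (zeta W P)"
proof (rule continuous_at_imp_continuous_on, intro ballI)
  fix x :: real assume x: "x \<in> {-1<..}"
  show "isCont (zeta W P) x"
  proof (cases "x = 0")
    case True then show ?thesis using Z_cont0 by simp
  next
    case False then show ?thesis using x by (intro Z_cont_dm) (auto simp: dm_def)
  qed
qed

lemma Z_anti: "antimono_on {-1<..} (zeta W P)"
proof (rule monotone_onI)
  fix x y :: real assume xy: "x \<in> {-1<..}" "y \<in> {-1<..}" "x \<le> y"
  show "zeta W P y \<le> zeta W P x"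
  proof (cases "x = y")
    case True then show ?thesis by simp
  next
    case False
    then have lt: "x < y" using xy by simp
    consider "x = 0" | "y = 0" | "x < 0" "0 < y" | "x \<noteq> 0" "y \<noteq> 0" "x > 0 \<longleftrightarrow> y > 0"
      using lt by (smt (verit))
    then show ?thesis
    proof cases
      case 1 then show ?thesis using Z_le_pos lt by simp
    next
      case 2 then show ?thesis using Z_le_neg lt xy by simp
    next
      case 3 then show ?thesis using Z_le_neg[of x] Z_le_pos[of y] xy by force
    next
      case 4 then show ?thesis using xy lt by (intro mono_same) (auto simp: dm_def)
    qed
  qed
qed

lemma Z_const:
  assumes l: "l > 0" and Pl: "\<And>t. t > 0 \<Longrightarrow> P t = l * t"
  shows "\<forall>\<alpha>>-1. zeta W P \<alpha> = 1 / l"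
proof -
  have nz: "zeta W P \<alpha> = 1 / l" if d: "dm \<alpha>" for \<alpha>
  proof -
    have "N \<alpha> = (LINT t:{0<..}|lborel. t powr (\<alpha> - 1) * (W (l * t) - Cst \<alpha>))"
      unfolding N_def by (rule set_lebesgue_integral_cong) (auto simp: Pl)
    also have "\<dots> = l powr (- \<alpha>) * D \<alpha>" by (rule scale(2)[OF d l])
    finally have Ne: "N \<alpha> = l powr (- \<alpha>) * D \<alpha>" .
    have Dn: "D \<alpha> \<noteq> 0" using ND_pos[OF d] by auto
    have a0: "\<alpha> \<noteq> 0" using d by (auto simp: dm_def)
    have "zeta W P \<alpha> = (l powr (- \<alpha>)) powr (1 / \<alpha>)"
      unfolding Z_eq[OF d] Ne using Dn by simp
    also have "\<dots> = l powr (- 1)" using a0 by (simp add: powr_powr)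
    also have "\<dots> = 1 / l" using l by (simp add: powr_neg_one)
    finally show ?thesis .
  qed
  show ?thesis
  proof (intro allI impI)
    fix \<alpha> :: real assume a: "\<alpha> > -1"
    show "zeta W P \<alpha> = 1 / l"
    proof (cases "\<alpha> = 0")
      case False then show ?thesis using a by (intro nz) (auto simp: dm_def)
    next
      case True
      have "zeta W P 0 \<le> zeta W P (-1/2)" by (rule Z_le_neg) auto
      moreover have "zeta W P (1/2) \<le> zeta W P 0" by (rule Z_le_pos) auto
      moreover have "zeta W P (-1/2) = 1 / l" "zeta W P (1/2) = 1 / l" by (auto intro!: nz simp: dm_def)
      ultimately show ?thesis using True by simp
    qed
  qed
qed

end

theorem lemma17:
  fixes \<omega> \<phi> :: "real \<Rightarrow> real"
  assumes \<omega>_nonneg: "\<And>t. t \<ge> 0 \<Longrightarrow> \<omega> t \<ge> 0"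
    and \<omega>_decr: "antimono_on {0..} \<omega>"
    and \<omega>_int_pos: "\<And>\<alpha>. \<alpha> > 0 \<Longrightarrow>
          set_integrable lborel {0<..} (\<lambda>t. t powr (\<alpha> - 1) * \<omega> t) \<and>
          0 < (LINT t:{0<..}|lborel. t powr (\<alpha> - 1) * \<omega> t)"
    and \<omega>_int_neg: "\<And>\<alpha>. -1 < \<alpha> \<Longrightarrow> \<alpha> < 0 \<Longrightarrow>
          set_integrable lborel {0<..} (\<lambda>t. t powr (\<alpha> - 1) * (\<omega> 0 - \<omega> t)) \<and>
          0 < (LINT t:{0<..}|lborel. t powr (\<alpha> - 1) * (\<omega> 0 - \<omega> t))"
    and \<phi>_nonneg: "\<And>t. t \<ge> 0 \<Longrightarrow> \<phi> t \<ge> 0"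
    and \<phi>_nonzero: "\<exists>t\<ge>0. \<phi> t \<noteq> 0"
    and \<phi>_0: "\<phi> 0 = 0"
    and \<phi>_incr: "mono_on {0<..} \<phi>"
    and \<phi>_quot_incr: "mono_on {0<..} (\<lambda>t. \<phi> t / t)"
  shows "continuous_on {-1<..} (zeta \<omega> \<phi>) \<and> antimono_on {-1<..} (zeta \<omega> \<phi>) \<and>
         ((\<exists>l>0. \<forall>t\<ge>0. \<phi> t = l * t) \<longrightarrow> (\<exists>c. \<forall>\<alpha>>-1. zeta \<omega> \<phi> \<alpha> = c))"
proof -
  define W where "W t = \<omega> (max 0 t)" for t
  define P where "P t = (if t > 0 then \<phi> t else 0)" for t
  obtain t1 where t1: "t1 \<ge> 0" "\<phi> t1 \<noteq> 0" using \<phi>_nonzero by blast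
  have t1p: "t1 > 0" using t1 \<phi>_0 by (cases "t1 = 0") auto
  have Pt1: "P t1 > 0" using t1 t1p \<phi>_nonneg[of t1] by (simp add: P_def)
  have WP: "\<omega> (\<phi> t) = W (P t)" if "t > 0" for t
    using that \<phi>_nonneg[of t] by (simp add: W_def P_def)
  have Wt: "\<omega> t = W t" if "t \<ge> 0" for t using that by (simp add: W_def)
  have W0: "W 0 = \<omega> 0" by (simp add: W_def)
  have Wle: "\<omega> y \<le> \<omega> x" if "0 \<le> x" "x \<le> y" for x y
    using \<omega>_decr that by (auto simp: monotone_on_def)
  interpret zset W P t1
  proof
    show "antimono W" unfolding antimono_def W_def
      by (intro allI impI Wle) auto
    show "W t \<ge> 0" for t unfolding W_def by (rule \<omega>_nonneg) simp
    show "set_integrable lborel {0<..} (\<lambda>t. t powr (\<alpha> - 1) * W t) \<and>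
          0 < (LINT t:{0<..}|lborel. t powr (\<alpha> - 1) * W t)" if "\<alpha> > 0" for \<alpha>
    proof -
      have q1: "set_integrable lborel {0<..} (\<lambda>t. t powr (\<alpha> - 1) * W t) = set_integrable lborel {0<..} (\<lambda>t. t powr (\<alpha> - 1) * \<omega> t)"
        by (rule set_integrable_cong) (auto simp: Wt)
      have q2: "(LINT t:{0<..}|lborel. t powr (\<alpha> - 1) * W t) = (LINT t:{0<..}|lborel. t powr (\<alpha> - 1) * \<omega> t)"
        by (rule set_lebesgue_integral_cong) (auto simp: Wt)
      show ?thesis unfolding q1 q2 by (rule \<omega>_int_pos[OF that])
    qed
    show "set_integrable lborel {0<..} (\<lambda>t. t powr (\<alpha> - 1) * (W 0 - W t)) \<and>
          0 < (LINT t:{0<..}|lborel. t powr (\<alpha> - 1) * (W 0 - W t))" if "-1 < \<alpha>" "\<alpha> < 0" for \<alpha>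
    proof -
      have q1: "set_integrable lborel {0<..} (\<lambda>t. t powr (\<alpha> - 1) * (W 0 - W t)) = set_integrable lborel {0<..} (\<lambda>t. t powr (\<alpha> - 1) * (\<omega> 0 - \<omega> t))"
        by (rule set_integrable_cong) (auto simp: Wt)
      have q2: "(LINT t:{0<..}|lborel. t powr (\<alpha> - 1) * (W 0 - W t)) = (LINT t:{0<..}|lborel. t powr (\<alpha> - 1) * (\<omega> 0 - \<omega> t))"
        by (rule set_lebesgue_integral_cong) (auto simp: Wt)
      show ?thesis unfolding q1 q2 by (rule \<omega>_int_neg[OF that])
    qed
    show "mono P"
    proof (rule monoI)
      fix x y :: real assume xy: "x \<le> y"
      show "P x \<le> P y"
      proof (cases "x > 0")
        case True
        then have "\<phi> x \<le> \<phi> y" using xy monotone_onD[OF \<phi>_incr, of x y] by simp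
        then show ?thesis using True xy by (simp add: P_def)
      next
        case False
        then show ?thesis using \<phi>_nonneg[of y] by (simp add: P_def)
      qed
    qed
    show "P t \<ge> 0" for t unfolding P_def using \<phi>_nonneg by auto
    show "t1 > 0" by (rule t1p)
    show "P t1 > 0" by (rule Pt1)
    show "mono_on {0<..} (\<lambda>t. P t / t)"
    proof (rule monotone_onI)
      fix x y :: real assume xy: "x \<in> {0<..}" "y \<in> {0<..}" "x \<le> y"
      then have "\<phi> x / x \<le> \<phi> y / y" using monotone_onD[OF \<phi>_quot_incr xy] by simp
      then show "P x / x \<le> P y / y" using xy by (simp add: P_def)
    qed
  qed
  have Zeq: "zeta \<omega> \<phi> = zeta W P"
  proof
    fix \<alpha> :: real
    have e1: "(LINT t:{0<..}|lborel. t powr (\<alpha> - 1) * \<omega> (\<phi> t)) = (LINT t:{0<..}|lborel. t powr (\<alpha> - 1) * W (P t))"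
      by (rule set_lebesgue_integral_cong) (auto simp: WP)
    have e2: "(LINT t:{0<..}|lborel. t powr (\<alpha> - 1) * \<omega> t) = (LINT t:{0<..}|lborel. t powr (\<alpha> - 1) * W t)"
      by (rule set_lebesgue_integral_cong) (auto simp: Wt)
    have e3: "(LINT t:{0<..}|lborel. (\<omega> (\<phi> t) - \<omega> t) / (t * \<omega> 0)) = (LINT t:{0<..}|lborel. (W (P t) - W t) / (t * W 0))"
      by (rule set_lebesgue_integral_cong) (auto simp: WP Wt)
    have e4: "(LINT t:{0<..}|lborel. t powr (\<alpha> - 1) * (\<omega> (\<phi> t) - \<omega> 0)) = (LINT t:{0<..}|lborel. t powr (\<alpha> - 1) * (W (P t) - W 0))"
      by (rule set_lebesgue_integral_cong) (auto simp: WP Wt)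
    have e5: "(LINT t:{0<..}|lborel. t powr (\<alpha> - 1) * (\<omega> t - \<omega> 0)) = (LINT t:{0<..}|lborel. t powr (\<alpha> - 1) * (W t - W 0))"
      by (rule set_lebesgue_integral_cong) (auto simp: Wt)
    show "zeta \<omega> \<phi> \<alpha> = zeta W P \<alpha>" unfolding zeta_def e1 e2 e3 e4 e5 ..
  qed
  have C: "(\<exists>l>0. \<forall>t\<ge>0. \<phi> t = l * t) \<longrightarrow> (\<exists>c. \<forall>\<alpha>>-1. zeta \<omega> \<phi> \<alpha> = c)"
  proof
    assume "\<exists>l>0. \<forall>t\<ge>0. \<phi> t = l * t"
    then obtain l where l: "l > 0" "\<forall>t\<ge>0. \<phi> t = l * t" by blast
    have "\<forall>\<alpha>>-1. zeta W P \<alpha> = 1 / l"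
      by (rule Z_const[OF l(1)]) (use l(2) in \<open>simp add: P_def\<close>)
    then show "\<exists>c. \<forall>\<alpha>>-1. zeta \<omega> \<phi> \<alpha> = c" unfolding Zeq by blast
  qed
  show ?thesis unfolding Zeq using Z_cont Z_anti C[unfolded Zeq] by blast
qed

end
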